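(* Assume condition (C) holds, so that $f$ is well defined. Suppose that $\sum_{i=0}^\infty\delta^-(i)<\infty$, that for every fixed $N\in\mathbb Z_+$, $\mathbb P_i\{X_n>N\text{ for all }n\ge0\}\to1$ as $i\to\infty$, and that $\sup_{i\in\mathbb Z_+}\mathbb E_i\ell(i)<\infty$. Then $\liminf_{i\to\infty}f(i)\ge1$ and $\inf_{i\in\mathbb Z_+}f(i)>0$.
   Context: Let $\mathbb Z_+=\{0,1,2,\dots\}$. Let $Q$ be a nonnegative transition kernel on $\mathbb Z_+$: $Q(i,j)\ge 0$ and $0<Q(i,\mathbb Z_+):=\sum_{j\ge0}Q(i,j)<\infty$ for every $i$, and $Q$ is irreducible (for all $i,j$ there is $n\ge1$ with $Q^n(i,j)>0$). Let $P(i,j):=Q(i,j)/Q(i,\mathbb Z_+)$ and let $(X_n)_{n\ge0}$ be a Markov chain on $\mathbb Z_+$ with transition matrix $P$; $\mathbb P_i,\mathbb E_i$ denote probability and expectation given $X_0=i$. Let $\delta(j):=\log Q(j,\mathbb Z_+)$, $\delta^+:=\max(\delta,0)$, $\delta^-:=\max(-\delta,0)$. The local time at $j$ is $\ell(j):=\sum_{n=0}^\infty\mathbf 1\{X_n=j\}$. Condition (C): for every $i$, $\mathbb E_i\prod_{n=0}^\infty \max(Q(X_n,\mathbb Z_+),1)<\infty$. Under (C) define $f(i):=\mathbb E_i\prod_{n=0}^\infty Q(X_n,\mathbb Z_+)\in[0,\infty)$ (equivalently $f(i)=\mathbb E_i\exp(\sum_j\ell(j)\delta(j))$). *)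

theory Defs
  imports "HOL-Probability.Probability"
begin

definition Qtot :: "(nat \<Rightarrow> nat \<Rightarrow> real) \<Rightarrow> nat \<Rightarrow> real" where
  "Qtot Q i = (\<Sum>j. Q i j)"

definition delta :: "(nat \<Rightarrow> nat \<Rightarrow> real) \<Rightarrow> nat \<Rightarrow> real" where
  "delta Q j = ln (Qtot Q j)"

fun Qpow :: "(nat \<Rightarrow> nat \<Rightarrow> real) \<Rightarrow> nat \<Rightarrow> nat \<Rightarrow> nat \<Rightarrow> ennreal" where
  "Qpow Q 0 i j = (if i = j then 1 else 0)"
| "Qpow Q (Suc n) i j = (\<Sum>k. Qpow Q n i k * ennreal (Q k j))"

definition irreducible_kernel :: "(nat \<Rightarrow> nat \<Rightarrow> real) \<Rightarrow> bool" where
  "irreducible_kernel Q \<longleftrightarrow> (\<forall>i j. \<exists>n\<ge>1. Qpow Q n i j > 0)"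

definition Ptrans :: "(nat \<Rightarrow> nat \<Rightarrow> real) \<Rightarrow> nat \<Rightarrow> nat pmf" where
  "Ptrans Q i = embed_pmf (\<lambda>j. Q i j / Qtot Q i)"

text \<open>Underlying probability space: independent samples \<open>\<omega> (n, j)\<close> from P(j, .)
  for every time n and state j (random mapping representation of a Markov chain).\<close>
definition Omega :: "(nat \<Rightarrow> nat \<Rightarrow> real) \<Rightarrow> (nat \<times> nat \<Rightarrow> nat) measure" where
  "Omega Q = (\<Pi>\<^sub>M nj\<in>UNIV. measure_pmf (Ptrans Q (snd nj)))"

text \<open>The Markov chain started at i: X_0 = i, X_{n+1} = \<omega>(n, X_n).
  Under Omega Q it has transition matrix P and X_0 = i, so Omega Q plays the role of P_i.\<close>
fun Xch :: "nat \<Rightarrow> nat \<Rightarrow> (nat \<times> nat \<Rightarrow> nat) \<Rightarrow> nat" where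
  "Xch i 0 \<omega> = i"
| "Xch i (Suc n) \<omega> = \<omega> (n, Xch i n \<omega>)"

definition loctime :: "nat \<Rightarrow> nat \<Rightarrow> (nat \<times> nat \<Rightarrow> nat) \<Rightarrow> ennreal" where
  "loctime i j \<omega> = (\<Sum>n. if Xch i n \<omega> = j then 1 else 0)"

definition prodinf_nn :: "(nat \<Rightarrow> real) \<Rightarrow> ennreal" where
  "prodinf_nn a = liminf (\<lambda>N. \<Prod>n<N. ennreal (a n))"

definition condC :: "(nat \<Rightarrow> nat \<Rightarrow> real) \<Rightarrow> bool" where
  "condC Q \<longleftrightarrow> (\<forall>i. (\<integral>\<^sup>+ \<omega>. prodinf_nn (\<lambda>n. max (Qtot Q (Xch i n \<omega>)) 1) \<partial>Omega Q) < \<infinity>)"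

definition fQ :: "(nat \<Rightarrow> nat \<Rightarrow> real) \<Rightarrow> nat \<Rightarrow> ennreal" where
  "fQ Q i = (\<integral>\<^sup>+ \<omega>. prodinf_nn (\<lambda>n. Qtot Q (Xch i n \<omega>)) \<partial>Omega Q)"

end

theory Submission
  imports Defs
begin


definition combw :: "nat \<Rightarrow> (nat \<times> nat \<Rightarrow> nat) \<Rightarrow> (nat \<times> nat \<Rightarrow> nat) \<Rightarrow> (nat \<times> nat \<Rightarrow> nat)" where
  "combw k \<omega> \<omega>' = (\<lambda>(n,j). if n < k then \<omega> (n,j) else \<omega>' (n - k, j))"

locale kern =
  fixes Q :: "nat \<Rightarrow> nat \<Rightarrow> real"
  assumes nonneg: "\<And>i j. Q i j \<ge> 0"
    and row_summable: "\<And>i. summable (Q i)"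
    and row_pos: "\<And>i. Qtot Q i > 0"
begin

abbreviation "Mc \<equiv> (\<lambda>nj::nat\<times>nat. measure_pmf (Ptrans Q (snd nj)))"

lemma Omega_eq: "Omega Q = PiM UNIV Mc" unfolding Omega_def by simp

lemma space_Omega[simp]: "space (Omega Q) = UNIV"
  by (auto simp: Omega_def space_PiM)

lemma sets_Mc[simp]: "sets (Mc nj) = UNIV" by simp

sublocale P: product_prob_space Mc UNIV
  by unfold_locales (simp add: prob_space_measure_pmf)

lemma prob_Omega: "prob_space (Omega Q)"
  unfolding Omega_def by (rule prob_space_PiM) (simp add: prob_space_measure_pmf)

lemma measurable_Xch[measurable]: "Xch i n \<in> measurable (Omega Q) (count_space UNIV)"
proof (induction n)
  case 0 then show ?case by simp
next
  case (Suc n)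
  have "(\<lambda>\<omega>. (\<lambda>k \<omega>. \<omega> (n, k)) (Xch i n \<omega>) \<omega>) \<in> measurable (Omega Q) (count_space UNIV)"
  proof (rule measurable_compose_countable[OF _ Suc])
    fix k
    show "(\<lambda>\<omega>. \<omega> (n, k)) \<in> measurable (Omega Q) (count_space UNIV)"
      unfolding Omega_def
      using measurable_component_singleton[of "(n,k)" UNIV Mc]
      by (simp add: measurable_cong_sets)
  qed
  then show ?case by simp
qed

lemma measurable_combw:
  "(\<lambda>(\<omega>, \<omega>'). combw k \<omega> \<omega>') \<in> measurable (Omega Q \<Otimes>\<^sub>M Omega Q) (Omega Q)"
  unfolding Omega_eq
proof (rule measurable_PiM_single)
  show "(\<lambda>(\<omega>, \<omega>'). combw k \<omega> \<omega>') \<in> space (PiM UNIV Mc \<Otimes>\<^sub>M PiM UNIV Mc) \<rightarrow> (\<Pi>\<^sub>E i\<in>UNIV. space (Mc i))"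
    by (auto simp: space_pair_measure space_PiM)
  fix nj :: "nat \<times> nat" and A assume A: "A \<in> sets (Mc nj)"
  obtain n j where nj: "nj = (n,j)" by force
  have *: "{\<omega> \<in> space (PiM UNIV Mc \<Otimes>\<^sub>M PiM UNIV Mc). case_prod (combw k) \<omega> nj \<in> A} =
    (if n < k then {\<omega> \<in> space (PiM UNIV Mc). \<omega> (n,j) \<in> A} \<times> space (PiM UNIV Mc)
              else space (PiM UNIV Mc) \<times> {\<omega> \<in> space (PiM UNIV Mc). \<omega> (n - k, j) \<in> A})"
    by (auto simp: space_PiM space_pair_measure combw_def nj)
  show "{\<omega> \<in> space (PiM UNIV Mc \<Otimes>\<^sub>M PiM UNIV Mc). case_prod (combw k) \<omega> nj \<in> A} \<in> sets (PiM UNIV Mc \<Otimes>\<^sub>M PiM UNIV Mc)"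
    unfolding * using A by (auto intro!: sets_Collect_single simp: nj)
qed


lemma prod_emb_Mc: "prod_emb UNIV Mc J (Pi\<^sub>E J A) = {\<omega>. \<forall>x\<in>J. \<omega> x \<in> A x}"
  by (auto simp: prod_emb_def PiE_iff)

lemma distr_combw': "distr (PiM UNIV Mc \<Otimes>\<^sub>M PiM UNIV Mc) (PiM UNIV Mc) (\<lambda>(\<omega>, \<omega>'). combw k \<omega> \<omega>') = PiM UNIV Mc"
  (is "?D = _")
proof (rule P.PiM_eq)
  let ?S = "PiM UNIV Mc"
  fix J E assume J: "finite J" "J \<subseteq> (UNIV :: (nat\<times>nat) set)" "\<And>j. j \<in> J \<Longrightarrow> E j \<in> sets (Mc j)"
  let ?f = "(\<lambda>(\<omega>, \<omega>'). combw k \<omega> \<omega>')"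
  let ?X = "prod_emb UNIV Mc J (\<Pi>\<^sub>E j\<in>J. E j)"
  define J1 where "J1 = {x\<in>J. fst x < k}"
  define J2 where "J2 = {(m,j). (m+k,j) \<in> J}"
  define E2 where "E2 = (\<lambda>(m,j). E (m+k,j))"
  have fin1: "finite J1" using J by (simp add: J1_def)
  have inj: "inj (\<lambda>(m,j). (m+k,j::nat))" by (auto simp: inj_def)
  have J2eq: "J2 = (\<lambda>(m,j). (m+k,j::nat)) -` J" by (auto simp: J2_def)
  have fin2: "finite J2" unfolding J2eq using J inj by (auto intro: finite_vimageI)
  have pre: "?f -` ?X \<inter> space (?S \<Otimes>\<^sub>M ?S) =
    prod_emb UNIV Mc J1 (\<Pi>\<^sub>E j\<in>J1. E j) \<times> prod_emb UNIV Mc J2 (\<Pi>\<^sub>E j\<in>J2. E2 j)"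
    unfolding prod_emb_Mc
    apply (auto simp: space_pair_measure space_PiM combw_def J1_def J2_def E2_def split: if_splits)
    by (metis le_add_diff_inverse2 not_less)
  have "emeasure ?D ?X = emeasure (?S \<Otimes>\<^sub>M ?S) (?f -` ?X \<inter> space (?S \<Otimes>\<^sub>M ?S))"
    apply (rule emeasure_distr[OF measurable_combw[unfolded Omega_eq]]) 
    by (rule sets_PiM_I) (use J in auto)
  also have "\<dots> = emeasure ?S (prod_emb UNIV Mc J1 (\<Pi>\<^sub>E j\<in>J1. E j)) * emeasure ?S (prod_emb UNIV Mc J2 (\<Pi>\<^sub>E j\<in>J2. E2 j))"
    unfolding pre using fin1 fin2 by (intro P.emeasure_pair_measure_Times) (auto intro!: sets_PiM_I)
  also have "emeasure ?S (prod_emb UNIV Mc J1 (\<Pi>\<^sub>E j\<in>J1. E j)) = (\<Prod>j\<in>J1. emeasure (Mc j) (E j))"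
    using fin1 by (intro P.emeasure_PiM_emb) auto
  also have "emeasure ?S (prod_emb UNIV Mc J2 (\<Pi>\<^sub>E j\<in>J2. E2 j)) = (\<Prod>j\<in>J2. emeasure (Mc j) (E2 j))"
    using fin2 by (intro P.emeasure_PiM_emb) auto
  also have "\<dots> = (\<Prod>j\<in>J - J1. emeasure (Mc j) (E j))"
  proof (rule prod.reindex_cong[of "\<lambda>(m,j). (m - k, j)"])
    show "inj_on (\<lambda>(m, j). (m - k, j)) (J - J1)"
      by (force simp: inj_on_def J1_def)
    show "J2 = (\<lambda>(m, j). (m - k, j)) ` (J - J1)"
    proof (intro set_eqI iffI)
      fix x assume "x \<in> J2"
      then obtain m j where x: "x = (m,j)" "(m+k,j) \<in> J" by (auto simp: J2_def)
      then show "x \<in> (\<lambda>(m, j). (m - k, j)) ` (J - J1)"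
        by (intro image_eqI[of _ _ "(m+k,j)"]) (auto simp: J1_def)
    next
      fix x assume "x \<in> (\<lambda>(m, j). (m - k, j)) ` (J - J1)"
      then obtain a b where "(a,b)\<in>J" "\<not> a<k" "x = (a-k,b)" by (force simp: J1_def)
      then show "x \<in> J2" by (auto simp: J2_def)
    qed
    fix x assume "x \<in> J - J1"
    then show "emeasure (Mc ((\<lambda>(m, j). (m - k, j)) x)) (E2 ((\<lambda>(m, j). (m - k, j)) x)) = emeasure (Mc x) (E x)"
    proof (cases x)
      case (Pair a b)
      with \<open>x \<in> J - J1\<close> have "a \<ge> k" by (auto simp: J1_def)
      then show ?thesis using Pair by (simp add: E2_def)
    qed
  qed
  also have "(\<Prod>j\<in>J1. emeasure (Mc j) (E j)) * (\<Prod>j\<in>J - J1. emeasure (Mc j) (E j)) = (\<Prod>j\<in>J. emeasure (Mc j) (E j))"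
    using J by (subst mult.commute) (auto simp: J1_def prod.subset_diff[symmetric])
  finally show "emeasure ?D ?X = (\<Prod>j\<in>J. emeasure (Mc j) (E j))"
    .
qed simp

lemma distr_combw: "distr (Omega Q \<Otimes>\<^sub>M Omega Q) (Omega Q) (\<lambda>(\<omega>, \<omega>'). combw k \<omega> \<omega>') = Omega Q"
  unfolding Omega_eq by (rule distr_combw')

end



lemma Xch_combw_le: "n \<le> k \<Longrightarrow> Xch i n (combw k \<omega> \<omega>') = Xch i n \<omega>"
proof (induction n)
  case (Suc n)
  then have IH: "Xch i n (combw k \<omega> \<omega>') = Xch i n \<omega>" by simp
  have "Xch i (Suc n) (combw k \<omega> \<omega>') = combw k \<omega> \<omega>' (n, Xch i n \<omega>)" using IH by simp
  also have "\<dots> = \<omega> (n, Xch i n \<omega>)" using Suc.prems by (simp add: combw_def)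
  finally show ?case by simp
qed simp

lemma Xch_combw_add: "Xch i (m + k) (combw k \<omega> \<omega>') = Xch (Xch i k \<omega>) m \<omega>'"
proof (induction m)
  case 0 then show ?case using Xch_combw_le[of k k i \<omega> \<omega>'] by simp
next
  case (Suc m)
  have "Xch i (Suc m + k) (combw k \<omega> \<omega>') = combw k \<omega> \<omega>' (m + k, Xch (Xch i k \<omega>) m \<omega>')"
    using Suc.IH by simp
  also have "\<dots> = \<omega>' (m, Xch (Xch i k \<omega>) m \<omega>')" by (simp add: combw_def)
  finally show ?case by simp
qed

context kern begin

lemma space_pair_Omega[simp]: "space (Omega Q \<Otimes>\<^sub>M Omega Q) = UNIV"
  by (simp add: space_pair_measure)

lemma nn_integral_combw:
  assumes H[measurable]: "H \<in> borel_measurable (Omega Q)"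
  shows "(\<integral>\<^sup>+\<omega>. H \<omega> \<partial>Omega Q) = (\<integral>\<^sup>+\<omega>. \<integral>\<^sup>+\<omega>'. H (combw k \<omega> \<omega>') \<partial>Omega Q \<partial>Omega Q)"
proof -
  interpret O: prob_space "Omega Q" by (rule prob_Omega)
  interpret PP: pair_sigma_finite "Omega Q" "Omega Q" by unfold_locales
  have m: "(\<lambda>(\<omega>, \<omega>'). combw k \<omega> \<omega>') \<in> measurable (Omega Q \<Otimes>\<^sub>M Omega Q) (Omega Q)"
    by (rule measurable_combw)
  have "(\<integral>\<^sup>+\<omega>. H \<omega> \<partial>Omega Q) = (\<integral>\<^sup>+\<omega>. H \<omega> \<partial>distr (Omega Q \<Otimes>\<^sub>M Omega Q) (Omega Q) (\<lambda>(\<omega>, \<omega>'). combw k \<omega> \<omega>'))"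
    by (simp add: distr_combw)
  also have "\<dots> = (\<integral>\<^sup>+x. H (case x of (\<omega>, \<omega>') \<Rightarrow> combw k \<omega> \<omega>') \<partial>(Omega Q \<Otimes>\<^sub>M Omega Q))"
    by (rule nn_integral_distr[OF m]) simp
  also have "\<dots> = (\<integral>\<^sup>+\<omega>. \<integral>\<^sup>+\<omega>'. H (combw k \<omega> \<omega>') \<partial>Omega Q \<partial>Omega Q)"
    using O.nn_integral_fst[OF measurable_compose[OF m H]]
    by (simp add: split_beta')
  finally show ?thesis .
qed

lemma measurable_loctime[measurable]: "loctime i j \<in> borel_measurable (Omega Q)"
  unfolding loctime_def by measurable

definition Tset :: "nat \<Rightarrow> nat \<Rightarrow> nat \<Rightarrow> (nat \<times> nat \<Rightarrow> nat) set" where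
  "Tset i j k = {\<omega>. Xch i k \<omega> = j \<and> (\<forall>n<k. Xch i n \<omega> \<noteq> j)}"

lemma Tset_sets[measurable]: "Tset i j k \<in> sets (Omega Q)"
proof -
  have "Tset i j k = {\<omega> \<in> space (Omega Q). Xch i k \<omega> = j \<and> (\<forall>n<k. Xch i n \<omega> \<noteq> j)}"
    by (simp add: Tset_def)
  also have "\<dots> \<in> sets (Omega Q)" by measurable
  finally show ?thesis .
qed

lemma loctime_decomp:
  "loctime i j \<omega> = (\<Sum>k. indicator (Tset i j k) \<omega> * loctime i j \<omega>)"
proof (cases "\<exists>n. Xch i n \<omega> = j")
  case True
  define k where "k = (LEAST n. Xch i n \<omega> = j)"
  have k: "\<omega> \<in> Tset i j k" unfolding Tset_def k_def
    using True by (auto intro: LeastI_ex dest: not_less_Least)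
  have other: "\<omega> \<notin> Tset i j k'" if "k' \<noteq> k" for k'
  proof
    assume "\<omega> \<in> Tset i j k'"
    with k that show False unfolding Tset_def
      by (cases "k' < k") (auto dest: spec[of _ k'] simp: not_less order.order_iff_strict)
  qed
  have "(\<Sum>k'. indicator (Tset i j k') \<omega> * loctime i j \<omega>) = (\<Sum>k'\<in>{k}. indicator (Tset i j k') \<omega> * loctime i j \<omega>)"
    by (rule suminf_finite) (auto simp: other)
  then show ?thesis using k by simp
next
  case False
  then have "loctime i j \<omega> = 0" by (simp add: loctime_def)
  then show ?thesis by simp
qed

lemma loctime_combw:
  assumes "\<omega> \<in> Tset i j k"
  shows "loctime i j (combw k \<omega> \<omega>') = loctime j j \<omega>'"
proof -
  let ?f = "\<lambda>n. if Xch i n (combw k \<omega> \<omega>') = j then 1 else (0::ennreal)"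
  have "loctime i j (combw k \<omega> \<omega>') = (\<Sum>m. ?f (m + k)) + (\<Sum>n<k. ?f n)"
    unfolding loctime_def by (rule suminf_offset) (rule summableI)
  also have "(\<Sum>n<k. ?f n) = 0"
    using assms by (auto simp: Tset_def Xch_combw_le intro!: sum.neutral)
  also have "(\<Sum>m. ?f (m + k)) = loctime j j \<omega>'"
    using assms by (simp add: Tset_def Xch_combw_add loctime_def)
  finally show ?thesis by simp
qed

lemma Tset_combw: "k' \<le> k \<Longrightarrow> (combw k \<omega> \<omega>' \<in> Tset i j k') = (\<omega> \<in> Tset i j k')"
  by (auto simp: Tset_def Xch_combw_le)

lemma strong_markov:
  "(\<integral>\<^sup>+\<omega>. loctime i j \<omega> \<partial>Omega Q) = emeasure (Omega Q) {\<omega>. \<exists>n. Xch i n \<omega> = j} * (\<integral>\<^sup>+\<omega>. loctime j j \<omega> \<partial>Omega Q)"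
proof -
  let ?c = "(\<integral>\<^sup>+\<omega>. loctime j j \<omega> \<partial>Omega Q)"
  have each: "(\<integral>\<^sup>+\<omega>. indicator (Tset i j k) \<omega> * loctime i j \<omega> \<partial>Omega Q) = emeasure (Omega Q) (Tset i j k) * ?c" for k
  proof -
    have "(\<integral>\<^sup>+\<omega>. indicator (Tset i j k) \<omega> * loctime i j \<omega> \<partial>Omega Q)
        = (\<integral>\<^sup>+\<omega>. \<integral>\<^sup>+\<omega>'. indicator (Tset i j k) (combw k \<omega> \<omega>') * loctime i j (combw k \<omega> \<omega>') \<partial>Omega Q \<partial>Omega Q)"
      by (rule nn_integral_combw) measurable
    also have "\<dots> = (\<integral>\<^sup>+\<omega>. \<integral>\<^sup>+\<omega>'. indicator (Tset i j k) \<omega> * loctime j j \<omega>' \<partial>Omega Q \<partial>Omega Q)"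
      by (intro nn_integral_cong) (auto simp: indicator_def Tset_combw loctime_combw)
    also have "\<dots> = (\<integral>\<^sup>+\<omega>. indicator (Tset i j k) \<omega> * ?c \<partial>Omega Q)"
      by (intro nn_integral_cong nn_integral_cmult) measurable
    also have "\<dots> = emeasure (Omega Q) (Tset i j k) * ?c"
      by (subst nn_integral_multc) auto
    finally show ?thesis .
  qed
  have "(\<integral>\<^sup>+\<omega>. loctime i j \<omega> \<partial>Omega Q) = (\<integral>\<^sup>+\<omega>. (\<Sum>k. indicator (Tset i j k) \<omega> * loctime i j \<omega>) \<partial>Omega Q)"
    by (subst loctime_decomp) simp
  also have "\<dots> = (\<Sum>k. \<integral>\<^sup>+\<omega>. indicator (Tset i j k) \<omega> * loctime i j \<omega> \<partial>Omega Q)"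
    by (rule nn_integral_suminf) measurable
  also have "\<dots> = (\<Sum>k. emeasure (Omega Q) (Tset i j k)) * ?c"
    by (simp add: each)
  also have "(\<Sum>k. emeasure (Omega Q) (Tset i j k)) = emeasure (Omega Q) (\<Union>k. Tset i j k)"
  proof (rule suminf_emeasure)
    show "disjoint_family (Tset i j)"
      unfolding disjoint_family_on_def Tset_def
      by (auto simp: set_eq_iff) (metis linorder_neqE_nat)
  qed auto
  also have "(\<Union>k. Tset i j k) = {\<omega>. \<exists>n. Xch i n \<omega> = j}"
  proof (intro set_eqI iffI)
    fix \<omega> assume "\<omega> \<in> {\<omega>. \<exists>n. Xch i n \<omega> = j}"
    then have "\<omega> \<in> Tset i j (LEAST n. Xch i n \<omega> = j)"
      unfolding Tset_def by (auto intro: LeastI_ex dest: not_less_Least)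
    then show "\<omega> \<in> (\<Union>k. Tset i j k)" by blast
  qed (auto simp: Tset_def)
  finally show ?thesis .
qed

end



lemma ennreal_suminf_swap:
  fixes f :: "nat \<Rightarrow> nat \<Rightarrow> ennreal"
  shows "(\<Sum>i. \<Sum>j. f i j) = (\<Sum>j. \<Sum>i. f i j)"
proof -
  interpret C: sigma_finite_measure "count_space (UNIV::nat set)"
    by (rule sigma_finite_measure_count_space)
  interpret PC: pair_sigma_finite "count_space (UNIV::nat set)" "count_space (UNIV::nat set)" ..
  have "(\<integral>\<^sup>+ j. \<integral>\<^sup>+ i. f i j \<partial>count_space UNIV \<partial>count_space UNIV) =
        (\<integral>\<^sup>+ i. \<integral>\<^sup>+ j. f i j \<partial>count_space UNIV \<partial>count_space UNIV)"
    by (rule PC.Fubini') (simp add: pair_measure_countable)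
  then show ?thesis by (simp add: nn_integral_count_space_nat)
qed

lemma ennreal_minus_plus_ge: "(a::ennreal) \<le> (a - y) + y"
proof (cases "y \<le> a")
  case True then show ?thesis by (simp add: diff_add_cancel_ennreal)
next
  case False then show ?thesis
    by (meson add_increasing linorder_not_le order.strict_implies_order zero_le)
qed

context kern begin

definition dm :: "nat \<Rightarrow> real" where "dm j = max (- delta Q j) 0"

definition Ysum :: "nat \<Rightarrow> (nat \<times> nat \<Rightarrow> nat) \<Rightarrow> ennreal" where
  "Ysum i \<omega> = (\<Sum>n. ennreal (dm (Xch i n \<omega>)))"

lemma measurable_Ysum[measurable]: "Ysum i \<in> borel_measurable (Omega Q)"
  unfolding Ysum_def by measurable

lemma dm_nonneg: "dm j \<ge> 0" by (simp add: dm_def)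

lemma Qtot_ge: "Qtot Q x \<ge> exp (- dm x)"
proof -
  have "- dm x \<le> ln (Qtot Q x)" by (simp add: dm_def delta_def)
  then have "exp (- dm x) \<le> exp (ln (Qtot Q x))" by simp
  then show ?thesis using row_pos[of x] by simp
qed

lemma pointwise_bound:
  assumes y0: "y0 \<ge> 0"
  shows "ennreal (exp (- y0)) * (ennreal (1 + y0) - Ysum i \<omega>) \<le> prodinf_nn (\<lambda>n. Qtot Q (Xch i n \<omega>))"
proof (cases "Ysum i \<omega> = top")
  case True then show ?thesis by simp
next
  case False
  then obtain y where y: "Ysum i \<omega> = ennreal y" "y \<ge> 0" by (cases "Ysum i \<omega>") auto
  let ?d = "\<lambda>n. dm (Xch i n \<omega>)"
  have part: "(\<Sum>n<N. ?d n) \<le> y" for N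
  proof -
    have "ennreal (\<Sum>n<N. ?d n) = (\<Sum>n<N. ennreal (?d n))"
      by (simp add: dm_nonneg sum_ennreal)
    also have "\<dots> \<le> Ysum i \<omega>" unfolding Ysum_def
      by (rule sum_le_suminf) (auto intro: summableI)
    finally show ?thesis using y by simp
  qed
  have pp: "ennreal (exp (- y)) \<le> (\<Prod>n<N. ennreal (Qtot Q (Xch i n \<omega>)))" for N
  proof -
    have "exp (- y) \<le> exp (- (\<Sum>n<N. ?d n))" using part[of N] by simp
    also have "\<dots> = (\<Prod>n<N. exp (- ?d n))" by (simp add: exp_sum[symmetric] sum_negf)
    also have "\<dots> \<le> (\<Prod>n<N. Qtot Q (Xch i n \<omega>))"
      by (rule prod_mono) (auto simp: Qtot_ge)
    finally show ?thesis
      by (subst prod_ennreal) (auto intro: ennreal_leI less_imp_le[OF row_pos])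
  qed
  have lim: "ennreal (exp (- y)) \<le> prodinf_nn (\<lambda>n. Qtot Q (Xch i n \<omega>))"
    unfolding prodinf_nn_def by (rule Liminf_bounded) (simp add: pp)
  have "exp (- y0) * (1 + y0 - y) \<le> exp (- y)"
  proof -
    have h: "1 + y0 - y \<le> exp (y0 - y)" using exp_ge_add_one_self[of "y0 - y"] by (simp add: algebra_simps)
    have "exp (- y0) * (1 + y0 - y) \<le> exp (- y0) * exp (y0 - y)"
      by (rule mult_left_mono[OF h]) simp
    also have "\<dots> = exp (- y)" by (simp add: exp_add[symmetric])
    finally show ?thesis .
  qed
  then have "ennreal (exp (- y0)) * (ennreal (1 + y0) - Ysum i \<omega>) \<le> ennreal (exp (- y))"
  proof -
    have "ennreal (1 + y0) - Ysum i \<omega> = ennreal (1 + y0 - y)"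
      unfolding y(1) by (rule ennreal_minus) (use y in simp)
    also have "ennreal (exp (- y0)) * \<dots> = ennreal (exp (- y0) * (1 + y0 - y))"
      by (rule ennreal_mult'[symmetric]) simp
    finally show ?thesis using \<open>exp (- y0) * (1 + y0 - y) \<le> exp (- y)\<close>
      by (simp add: ennreal_leI)
  qed
  with lim show ?thesis by (meson order_trans)
qed

lemma fQ_bound:
  assumes y0: "y0 \<ge> 0"
  shows "ennreal (exp (- y0)) * (ennreal (1 + y0) - (\<integral>\<^sup>+\<omega>. Ysum i \<omega> \<partial>Omega Q)) \<le> fQ Q i"
proof -
  interpret O: prob_space "Omega Q" by (rule prob_Omega)
  let ?a = "ennreal (1 + y0)"
  have "?a = (\<integral>\<^sup>+\<omega>. ?a \<partial>Omega Q)" using O.emeasure_space_1 by simp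
  also have "\<dots> \<le> (\<integral>\<^sup>+\<omega>. (?a - Ysum i \<omega>) + Ysum i \<omega> \<partial>Omega Q)"
    by (intro nn_integral_mono ennreal_minus_plus_ge)
  also have "\<dots> = (\<integral>\<^sup>+\<omega>. (?a - Ysum i \<omega>) \<partial>Omega Q) + (\<integral>\<^sup>+\<omega>. Ysum i \<omega> \<partial>Omega Q)"
    by (rule nn_integral_add) measurable
  finally have "?a - (\<integral>\<^sup>+\<omega>. Ysum i \<omega> \<partial>Omega Q) \<le> (\<integral>\<^sup>+\<omega>. (?a - Ysum i \<omega>) \<partial>Omega Q)"
    by (simp add: ennreal_minus_le_iff add.commute)
  then have "ennreal (exp (- y0)) * (?a - (\<integral>\<^sup>+\<omega>. Ysum i \<omega> \<partial>Omega Q))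
      \<le> ennreal (exp (- y0)) * (\<integral>\<^sup>+\<omega>. (?a - Ysum i \<omega>) \<partial>Omega Q)"
    by (rule mult_left_mono) simp
  also have "\<dots> = (\<integral>\<^sup>+\<omega>. ennreal (exp (- y0)) * (?a - Ysum i \<omega>) \<partial>Omega Q)"
    by (rule nn_integral_cmult[symmetric]) measurable
  also have "\<dots> \<le> fQ Q i" unfolding fQ_def
    by (intro nn_integral_mono pointwise_bound y0)
  finally show ?thesis .
qed

lemma Ysum_eq: "Ysum i \<omega> = (\<Sum>j. ennreal (dm j) * loctime i j \<omega>)"
proof -
  have inner: "(\<Sum>j. ennreal (dm j) * (if Xch i n \<omega> = j then 1 else 0)) = ennreal (dm (Xch i n \<omega>))" for n
  proof -
    have "(\<Sum>j. ennreal (dm j) * (if Xch i n \<omega> = j then 1 else 0)) =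
          (\<Sum>j\<in>{Xch i n \<omega>}. ennreal (dm j) * (if Xch i n \<omega> = j then 1 else 0))"
      by (rule suminf_finite) auto
    then show ?thesis by simp
  qed
  have "(\<Sum>j. ennreal (dm j) * loctime i j \<omega>) = (\<Sum>j. \<Sum>n. ennreal (dm j) * (if Xch i n \<omega> = j then 1 else 0))"
    by (simp add: loctime_def)
  also have "\<dots> = (\<Sum>n. \<Sum>j. ennreal (dm j) * (if Xch i n \<omega> = j then 1 else 0))"
    by (rule ennreal_suminf_swap)
  also have "\<dots> = Ysum i \<omega>" by (simp add: inner Ysum_def)
  finally show ?thesis by simp
qed

lemma int_Ysum: "(\<integral>\<^sup>+\<omega>. Ysum i \<omega> \<partial>Omega Q) = (\<Sum>j. ennreal (dm j) * (\<integral>\<^sup>+\<omega>. loctime i j \<omega> \<partial>Omega Q))"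
proof -
  have "(\<integral>\<^sup>+\<omega>. Ysum i \<omega> \<partial>Omega Q) = (\<integral>\<^sup>+\<omega>. (\<Sum>j. ennreal (dm j) * loctime i j \<omega>) \<partial>Omega Q)"
    by (simp add: Ysum_eq)
  also have "\<dots> = (\<Sum>j. \<integral>\<^sup>+\<omega>. ennreal (dm j) * loctime i j \<omega> \<partial>Omega Q)"
    by (rule nn_integral_suminf) measurable
  also have "\<dots> = (\<Sum>j. ennreal (dm j) * (\<integral>\<^sup>+\<omega>. loctime i j \<omega> \<partial>Omega Q))"
    by (intro suminf_cong nn_integral_cmult) measurable
  finally show ?thesis .
qed

end



locale kern2 = kern +
  assumes delta_minus: "summable (\<lambda>i. max (- delta Q i) 0)"
    and escape: "\<And>N::nat. (\<lambda>i. measure (Omega Q) {\<omega> \<in> space (Omega Q). \<forall>n. Xch i n \<omega> > N}) \<longlonglongrightarrow> 1"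
    and green: "(SUP i. \<integral>\<^sup>+ \<omega>. loctime i i \<omega> \<partial>Omega Q) < \<infinity>"
begin

definition "G = enn2real (SUP i. \<integral>\<^sup>+ \<omega>. loctime i i \<omega> \<partial>Omega Q)"
definition "S = suminf dm"
definition "avoid i N = {\<omega> \<in> space (Omega Q). \<forall>n. Xch i n \<omega> > N}"
definition "qq i N = 1 - measure (Omega Q) (avoid i N)"
definition "T N = (\<Sum>j. dm (j + N))"

lemma summable_dm: "summable dm" using delta_minus by (simp add: dm_def[abs_def])

lemma G_nonneg: "G \<ge> 0" by (simp add: G_def)
lemma S_nonneg: "S \<ge> 0" unfolding S_def by (rule suminf_nonneg[OF summable_dm dm_nonneg])
lemma T_nonneg: "T N \<ge> 0" unfolding T_def
  by (rule suminf_nonneg) (auto simp: dm_nonneg summable_dm summable_iff_shift)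

lemma Gs: "(SUP i. \<integral>\<^sup>+ \<omega>. loctime i i \<omega> \<partial>Omega Q) = ennreal G"
  unfolding G_def by (rule ennreal_enn2real[symmetric]) (use green in simp)

lemma avoid_sets[measurable]: "avoid i N \<in> sets (Omega Q)"
  unfolding avoid_def by measurable

lemma loc_bound: "(\<integral>\<^sup>+\<omega>. loctime i j \<omega> \<partial>Omega Q) \<le> emeasure (Omega Q) {\<omega>. \<exists>n. Xch i n \<omega> = j} * ennreal G"
proof -
  have "(\<integral>\<^sup>+\<omega>. loctime j j \<omega> \<partial>Omega Q) \<le> ennreal G"
    unfolding Gs[symmetric] by (rule SUP_upper) simp
  then show ?thesis by (subst strong_markov) (rule mult_left_mono, simp_all)
qed

lemma hit_le1: "emeasure (Omega Q) {\<omega>. \<exists>n. Xch i n \<omega> = j} \<le> 1"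
proof -
  interpret O: prob_space "Omega Q" by (rule prob_Omega)
  show ?thesis by (rule O.emeasure_le_1)
qed

lemma hit_leq: assumes "j < N" shows "emeasure (Omega Q) {\<omega>. \<exists>n. Xch i n \<omega> = j} \<le> ennreal (qq i N)"
proof -
  interpret O: prob_space "Omega Q" by (rule prob_Omega)
  have B: "space (Omega Q) - avoid i N \<in> sets (Omega Q)" by (intro sets.Diff sets.top avoid_sets)
  have sub: "{\<omega>. \<exists>n. Xch i n \<omega> = j} \<subseteq> space (Omega Q) - avoid i N"
  proof
    fix \<omega> assume "\<omega> \<in> {\<omega>. \<exists>n. Xch i n \<omega> = j}"
    then obtain n where n: "Xch i n \<omega> = j" by blast
    then have "\<not> (N < Xch i n \<omega>)" using assms by simp
    then show "\<omega> \<in> space (Omega Q) - avoid i N" unfolding avoid_def by auto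
  qed
  have "emeasure (Omega Q) {\<omega>. \<exists>n. Xch i n \<omega> = j} \<le> emeasure (Omega Q) (space (Omega Q) - avoid i N)"
    by (rule emeasure_mono[OF sub B])
  also have "\<dots> = ennreal (measure (Omega Q) (space (Omega Q) - avoid i N))"
    by (simp add: O.emeasure_eq_measure)
  also have "measure (Omega Q) (space (Omega Q) - avoid i N) = qq i N"
    unfolding qq_def by (subst O.prob_compl) auto
  finally show ?thesis .
qed

lemma qq_nonneg: "qq i N \<ge> 0"
proof -
  interpret O: prob_space "Omega Q" by (rule prob_Omega)
  show ?thesis unfolding qq_def by simp
qed

lemma intY_bound1: "(\<integral>\<^sup>+\<omega>. Ysum i \<omega> \<partial>Omega Q) \<le> ennreal (G * S)"
proof -
  have "(\<integral>\<^sup>+\<omega>. Ysum i \<omega> \<partial>Omega Q) \<le> (\<Sum>j. ennreal (dm j) * ennreal G)"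
    unfolding int_Ysum
  proof (intro suminf_le mult_left_mono)
    fix j
    have "(\<integral>\<^sup>+\<omega>. loctime i j \<omega> \<partial>Omega Q) \<le> emeasure (Omega Q) {\<omega>. \<exists>n. Xch i n \<omega> = j} * ennreal G"
      by (rule loc_bound)
    also have "\<dots> \<le> 1 * ennreal G" by (intro mult_right_mono hit_le1) simp
    finally show "(\<integral>\<^sup>+\<omega>. loctime i j \<omega> \<partial>Omega Q) \<le> ennreal G" by simp
  qed (auto intro: summableI)
  also have "\<dots> = ennreal S * ennreal G"
    by (simp add: S_def suminf_ennreal2[OF dm_nonneg summable_dm])
  also have "\<dots> = ennreal (G * S)" using ennreal_mult[OF G_nonneg S_nonneg] by (simp add: mult.commute)
  finally show ?thesis .
qed

lemma intY_bound2: "(\<integral>\<^sup>+\<omega>. Ysum i \<omega> \<partial>Omega Q) \<le> ennreal (G * (T N + S * qq i N))"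
proof -
  let ?h = "\<lambda>j. emeasure (Omega Q) {\<omega>. \<exists>n. Xch i n \<omega> = j}"
  have "(\<integral>\<^sup>+\<omega>. Ysum i \<omega> \<partial>Omega Q) \<le> (\<Sum>j. ennreal (dm j) * ?h j) * ennreal G"
    unfolding int_Ysum ennreal_suminf_multc[symmetric] mult.assoc
    by (intro suminf_le mult_left_mono loc_bound) (auto intro: summableI)
  also have "(\<Sum>j. ennreal (dm j) * ?h j) = (\<Sum>j. ennreal (dm (j + N)) * ?h (j + N)) + (\<Sum>j<N. ennreal (dm j) * ?h j)"
    by (rule suminf_offset) (rule summableI)
  also have "(\<Sum>j. ennreal (dm (j + N)) * ?h (j + N)) \<le> (\<Sum>j. ennreal (dm (j + N)))"
  proof (intro suminf_le)
    fix n show "ennreal (dm (n + N)) * ?h (n + N) \<le> ennreal (dm (n + N))"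
      using mult_left_mono[OF hit_le1, of "ennreal (dm (n+N))"] by simp
  qed (auto intro: summableI)
  also have "\<dots> = ennreal (T N)"
    unfolding T_def by (rule suminf_ennreal2) (auto simp: dm_nonneg summable_dm summable_iff_shift)
  also have "(\<Sum>j<N. ennreal (dm j) * ?h j) \<le> (\<Sum>j<N. ennreal (dm j) * ennreal (qq i N))"
    by (intro sum_mono mult_left_mono hit_leq) auto
  also have "\<dots> = ennreal ((\<Sum>j<N. dm j) * qq i N)"
    by (simp add: sum_distrib_right[symmetric] sum_ennreal dm_nonneg ennreal_mult'' qq_nonneg)
  also have "\<dots> \<le> ennreal (S * qq i N)"
    unfolding S_def
    by (intro ennreal_leI mult_right_mono sum_le_suminf summable_dm) (auto simp: dm_nonneg qq_nonneg)
  finally have "(\<integral>\<^sup>+\<omega>. Ysum i \<omega> \<partial>Omega Q) \<le> (ennreal (T N) + ennreal (S * qq i N)) * ennreal G"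
    by (simp add: mult_right_mono add_mono)
  also have "\<dots> = ennreal (G * (T N + S * qq i N))"
  proof -
    have "ennreal (T N + S * qq i N) = ennreal (T N) + ennreal (S * qq i N)"
      by (rule ennreal_plus[OF T_nonneg]) (simp add: S_nonneg qq_nonneg)
    moreover have "ennreal (G * (T N + S * qq i N)) = ennreal G * ennreal (T N + S * qq i N)"
      by (rule ennreal_mult[OF G_nonneg]) (simp add: T_nonneg S_nonneg qq_nonneg)
    ultimately show ?thesis by (simp add: mult.commute)
  qed
  finally show ?thesis .
qed

lemma inf_pos: "(INF i. fQ Q i) > 0"
proof -
  define K where "K = G * S"
  have K: "K \<ge> 0" unfolding K_def using G_nonneg S_nonneg by simp
  have "ennreal (exp (- K)) \<le> fQ Q i" for i
  proof -
    have "ennreal (exp (- K)) = ennreal (exp (- K)) * (ennreal (1 + K) - ennreal K)"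
      using K by (subst ennreal_minus) auto
    also have "\<dots> \<le> ennreal (exp (- K)) * (ennreal (1 + K) - (\<integral>\<^sup>+\<omega>. Ysum i \<omega> \<partial>Omega Q))"
      by (intro mult_left_mono ennreal_minus_mono) (auto simp: K_def intY_bound1)
    also have "\<dots> \<le> fQ Q i" by (rule fQ_bound[OF K])
    finally show ?thesis .
  qed
  then have "ennreal (exp (- K)) \<le> (INF i. fQ Q i)" by (rule INF_greatest)
  moreover have "0 < ennreal (exp (- K))" by simp
  ultimately show ?thesis by (rule less_le_trans[rotated])
qed

lemma liminf_ge: "liminf (\<lambda>i. fQ Q i) \<ge> 1"
proof -
  have step: "ennreal (1 - G * T N) \<le> liminf (\<lambda>i. fQ Q i)" for N
  proof -
    have low: "ennreal (1 - G * (T N + S * qq i N)) \<le> fQ Q i" for i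
    proof -
      have "ennreal (1 - G * (T N + S * qq i N)) = ennreal 1 - ennreal (G * (T N + S * qq i N))"
        using ennreal_minus[of "G * (T N + S * qq i N)" 1] T_nonneg S_nonneg qq_nonneg G_nonneg by simp
      also have "\<dots> \<le> ennreal 1 - (\<integral>\<^sup>+\<omega>. Ysum i \<omega> \<partial>Omega Q)"
        by (intro ennreal_minus_mono intY_bound2) simp
      also have "\<dots> = ennreal (exp (- 0)) * (ennreal (1 + 0) - (\<integral>\<^sup>+\<omega>. Ysum i \<omega> \<partial>Omega Q))"
        by simp
      also have "\<dots> \<le> fQ Q i" by (rule fQ_bound) simp
      finally show ?thesis .
    qed
    have qq0: "(\<lambda>i. qq i N) \<longlonglongrightarrow> 0"
      unfolding qq_def avoid_def using tendsto_diff[OF tendsto_const escape[of N], of 1] by simp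
    have "(\<lambda>i. 1 - G * (T N + S * qq i N)) \<longlonglongrightarrow> 1 - G * (T N + S * 0)"
      by (intro tendsto_intros qq0)
    then have "(\<lambda>i. ennreal (1 - G * (T N + S * qq i N))) \<longlonglongrightarrow> ennreal (1 - G * T N)"
      by (intro tendsto_ennrealI) simp
    then have "liminf (\<lambda>i. ennreal (1 - G * (T N + S * qq i N))) = ennreal (1 - G * T N)"
      by (rule lim_imp_Liminf[rotated]) simp
    moreover have "liminf (\<lambda>i. ennreal (1 - G * (T N + S * qq i N))) \<le> liminf (\<lambda>i. fQ Q i)"
      by (intro Liminf_mono always_eventually allI low)
    ultimately show ?thesis by simp
  qed
  have T0: "T \<longlonglongrightarrow> 0"
  proof -
    have "T = (\<lambda>N. S - (\<Sum>j<N. dm j))"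
      unfolding T_def S_def by (intro ext suminf_minus_initial_segment summable_dm)
    moreover have "(\<lambda>N. S - (\<Sum>j<N. dm j)) \<longlonglongrightarrow> S - S"
      unfolding S_def by (intro tendsto_intros summable_LIMSEQ summable_dm)
    ultimately show ?thesis by simp
  qed
  have "(\<lambda>N. ennreal (1 - G * T N)) \<longlonglongrightarrow> ennreal (1 - G * 0)"
    by (intro tendsto_ennrealI tendsto_intros T0)
  then have "ennreal (1 - G * 0) \<le> liminf (\<lambda>i. fQ Q i)"
    by (rule LIMSEQ_le_const2) (use step in blast)
  then show ?thesis by simp
qed

end


theorem proposition2:
  fixes Q :: "nat \<Rightarrow> nat \<Rightarrow> real"
  assumes nonneg: "\<And>i j. Q i j \<ge> 0"
    and row_summable: "\<And>i. summable (Q i)"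
    and row_pos: "\<And>i. Qtot Q i > 0"
    and irred: "irreducible_kernel Q"
    and C: "condC Q"
    and delta_minus: "summable (\<lambda>i. max (- delta Q i) 0)"
    and escape: "\<And>N::nat. (\<lambda>i. measure (Omega Q) {\<omega> \<in> space (Omega Q). \<forall>n. Xch i n \<omega> > N})
                    \<longlonglongrightarrow> 1"
    and green: "(SUP i. \<integral>\<^sup>+ \<omega>. loctime i i \<omega> \<partial>Omega Q) < \<infinity>"
  shows "liminf (\<lambda>i. fQ Q i) \<ge> 1 \<and> (INF i. fQ Q i) > 0"
proof -
  interpret K: kern2 Q
  proof (unfold_locales)
    show "\<And>i j. Q i j \<ge> 0" by (fact nonneg)
    show "\<And>i. summable (Q i)" by (fact row_summable)
    show "\<And>i. Qtot Q i > 0" by (fact row_pos)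
    show "summable (\<lambda>i. max (- delta Q i) 0)" by (fact delta_minus)
    show "\<And>N::nat. (\<lambda>i. measure (Omega Q) {\<omega> \<in> space (Omega Q). \<forall>n. Xch i n \<omega> > N}) \<longlonglongrightarrow> 1"
      by (fact escape)
    show "(SUP i. \<integral>\<^sup>+ \<omega>. loctime i i \<omega> \<partial>Omega Q) < \<infinity>" by (fact green)
  qed
  show ?thesis using K.liminf_ge K.inf_pos by simp
qed

end
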